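(* The matrix $A$ normalizes the group $\mathrm{H}$, that is, $A\mathrm{H}A^{-1}=\mathrm{H}$.
   Context: Let $\langle x,y\rangle=x_1y_1+\dots+x_6y_6-x_7y_7$ on $\mathbb{R}^7$, $H^6=\{x:\langle x,x\rangle=-1,x_7>0\}$, and $e_1,\dots,e_7$ the standard basis. $\Gamma^6=PO_{6,1}\mathbb{Z}$ is the group of $7\times7$ integer matrices preserving $\langle\cdot,\cdot\rangle$ and mapping $H^6$ to itself. $\mathrm{K}^6$ is the group of the $64$ matrices $\mathrm{diag}(\varepsilon_1,\dots,\varepsilon_6,1)$, $\varepsilon_i=\pm1$. Define vectors $u_1,\dots,u_{27}$: $u_i=-e_i$ for $1\le i\le 6$; $u_7,\dots,u_{21}$ are $e_a+e_b+e_7$ for the pairs $(a,b)=(1,2),(1,3),(2,3),(1,4),(2,4),(3,4),(1,5),(2,5),(3,5),(4,5),(1,6),(2,6),(3,6),(4,6),(5,6)$ in this order; $u_{22},\dots,u_{27}$ are $\sum_{i=1}^6e_i-e_c+2e_7$ for $c=6,5,4,3,2,1$ in this order. Let $R_j$ be the reflection $x\mapsto x-2\langle x,u_j\rangle u_j$. For $7\le j\le27$ let $k_j\in\mathrm{K}^6$ be the matrix with $\varepsilon_i=-1$ exactly for $i\in N_j$, where $N_7=\{2,3,5\}$, $N_8=\{1,2,3,4,5\}$, $N_9=\{3,4,5\}$, $N_{10}=\{1,2,3,5,6\}$, $N_{11}=\{1,4,6\}$, $N_{12}=\{2,3,5\}$, $N_{13}=\{3,4,5\}$, $N_{14}=\{1,2,5\}$,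 $N_{15}=\{5\}$, $N_{16}=\{2,4,6\}$, $N_{17}=\{1,2,5\}$, $N_{18}=\{2,4,6\}$, $N_{19}=\{6\}$, $N_{20}=\{1,3,4\}$, $N_{21}=\{1,2,3,5,6\}$, $N_{22}=\{1,3,4\}$, $N_{23}=\{2\}$, $N_{24}=\{1,4,6\}$, $N_{25}=\{1,2,3,4,5\}$, $N_{26}=\{4\}$, $N_{27}=\{3\}$. Let $\mathrm{H}$ be the subgroup of $\Gamma^6$ generated by all matrices $\ell R_j\ell k_j$ with $\ell\in\mathrm{K}^6$ and $7\le j\le 27$. Let $A=\begin{pmatrix}1&0&0&0&0&0&0\\0&1&0&0&1&0&-1\\0&0&0&0&0&1&0\\0&-1&0&-1&0&0&1\\0&0&1&0&0&0&0\\0&0&0&-1&-1&0&1\\0&-1&0&-1&-1&0&2\end{pmatrix}\in\Gamma^6.$ *)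

theory Defs
  imports "Jordan_Normal_Form.Matrix" "HOL-Algebra.Generated_Groups"
begin

(* Vectors of R^7 / Z^7 are JNF vectors of dimension 7, with 0-based indices:
   coordinate x_i of the paper is  x $ (i-1);  e_i is  unit_vec 7 (i-1). *)

definition lor :: "'a::comm_ring vec \<Rightarrow> 'a vec \<Rightarrow> 'a" where
  "lor x y = (\<Sum>i<6. x $ i * y $ i) - x $ 6 * y $ 6"

definition H6 :: "real vec set" where
  "H6 = {x \<in> carrier_vec 7. lor x x = -1 \<and> x $ 6 > 0}"

definition Gamma6_set :: "int mat set" where
  "Gamma6_set = {M \<in> carrier_mat 7 7.
     (\<forall>x\<in>carrier_vec 7. \<forall>y\<in>carrier_vec 7.
        lor (map_mat real_of_int M *\<^sub>v x) (map_mat real_of_int M *\<^sub>v y) = lor x y) \<and>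
     (\<lambda>x. map_mat real_of_int M *\<^sub>v x) ` H6 = H6}"

definition Gamma6 :: "int mat monoid" where
  "Gamma6 = \<lparr>carrier = Gamma6_set, mult = (*), one = 1\<^sub>m 7\<rparr>"

(* diag(eps_1,...,eps_6,1) with eps_i = -1 exactly for i in N (1-based) *)
definition kmat :: "nat set \<Rightarrow> int mat" where
  "kmat N = mat 7 7 (\<lambda>(i,j). if i = j then (if i < 6 \<and> Suc i \<in> N then -1 else 1) else 0)"

definition K6 :: "int mat set" where
  "K6 = {kmat N | N. N \<subseteq> {1..6}}"

definition e :: "nat \<Rightarrow> int vec" where
  "e i = unit_vec 7 (i - 1)"

definition u :: "nat \<Rightarrow> int vec" where
  "u j = (if j \<le> 6 then - e j
          else if j \<le> 21 then
            (let (a, b) = [(1,2),(1,3),(2,3),(1,4),(2,4),(3,4),(1,5),(2,5),(3,5),(4,5),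
                           (1,6),(2,6),(3,6),(4,6),(5,6)] ! (j - 7)
             in e a + e b + e 7)
          else
            (let c = [6,5,4,3,2,1::nat] ! (j - 22)
             in (e 1 + e 2 + e 3 + e 4 + e 5 + e 6) - e c + 2 \<cdot>\<^sub>v e 7))"

(* matrix of the reflection x \<mapsto> x - 2<x,v>v : column b is the image of e_{b+1} *)
definition refl_mat :: "int vec \<Rightarrow> int mat" where
  "refl_mat v = mat 7 7 (\<lambda>(a,b). (if a = b then 1 else 0) - 2 * lor (unit_vec 7 b) v * v $ a)"

definition R :: "nat \<Rightarrow> int mat" where
  "R j = refl_mat (u j)"

definition N :: "nat \<Rightarrow> nat set" where
  "N j = [{2,3,5},{1,2,3,4,5},{3,4,5},{1,2,3,5,6},{1,4,6},{2,3,5},{3,4,5},{1,2,5},{5},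
          {2,4,6},{1,2,5},{2,4,6},{6},{1,3,4},{1,2,3,5,6},{1,3,4},{2},{1,4,6},
          {1,2,3,4,5},{4},{3}] ! (j - 7)"

definition k :: "nat \<Rightarrow> int mat" where
  "k j = kmat (N j)"

definition Hgens :: "int mat set" where
  "Hgens = {l * R j * l * k j | l j. l \<in> K6 \<and> 7 \<le> j \<and> j \<le> 27}"

definition Hgrp :: "int mat set" where
  "Hgrp = generate Gamma6 Hgens"

definition A :: "int mat" where
  "A = mat_of_rows_list 7
    [[1,0,0,0,0,0,0],
     [0,1,0,0,1,0,-1],
     [0,0,0,0,0,1,0],
     [0,-1,0,-1,0,0,1],
     [0,0,1,0,0,0,0],
     [0,0,0,-1,-1,0,1],
     [0,-1,0,-1,-1,0,2]]"

end

theory Submission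
  imports Defs
begin


definition jj :: "nat \<Rightarrow> int" where "jj t = (if t = 6 then -1 else 1)"

definition Jm :: "int mat" where "Jm = mat 7 7 (\<lambda>(i,j). if i = j then jj i else 0)"

lemma Jm_carrier[simp]: "Jm \<in> carrier_mat 7 7" by (simp add: Jm_def)

lemma idx_mult7: "P \<in> carrier_mat 7 7 \<Longrightarrow> Q \<in> carrier_mat 7 7 \<Longrightarrow> a < 7 \<Longrightarrow> b < 7 \<Longrightarrow>
  (P * Q) $$ (a,b) = (\<Sum>t<7. P $$ (a,t) * Q $$ (t,b))"
  by (simp add: scalar_prod_def lessThan_atLeast0)

lemma idx_mv7: "P \<in> carrier_mat 7 7 \<Longrightarrow> x \<in> carrier_vec 7 \<Longrightarrow> a < 7 \<Longrightarrow>
  (P *\<^sub>v x) $ a = (\<Sum>t<7. P $$ (a,t) * x $ t)"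
  by (simp add: scalar_prod_def lessThan_atLeast0)

lemma tJt: assumes "M \<in> carrier_mat 7 7" "a < 7" "b < 7"
  shows "(transpose_mat M * Jm * M) $$ (a,b) = (\<Sum>t<7. M $$ (t,a) * jj t * M $$ (t,b))"
proof -
  have "(transpose_mat M * Jm * M) $$ (a,b) = (\<Sum>s<7. (transpose_mat M * Jm) $$ (a,s) * M $$ (s,b))"
    using assms by (intro idx_mult7) auto
  also have "\<dots> = (\<Sum>s<7. (M $$ (s,a) * jj s) * M $$ (s,b))"
  proof (rule sum.cong[OF refl])
    fix s :: nat assume s: "s \<in> {..<7}"
    have "(transpose_mat M * Jm) $$ (a,s) = (\<Sum>t<7. M $$ (t,a) * (if t = s then jj t else 0))"
      using assms s by (subst idx_mult7) (auto simp: Jm_def)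
    also have "\<dots> = M $$ (s,a) * jj s" using s
      by (simp add: if_distrib[of "\<lambda>z. M $$ (_,a) * z"] cong: if_cong)
    finally show "(transpose_mat M * Jm) $$ (a,s) * M $$ (s,b) = (M $$ (s,a) * jj s) * M $$ (s,b)" by simp
  qed
  finally show ?thesis .
qed

lemma lor_jj: "lor x y = (\<Sum>i<7. x $ i * of_int (jj i) * y $ i)"
  by (simp add: lor_def jj_def lessThan_Suc numeral_eq_Suc)

lemma G0: assumes M: "M \<in> carrier_mat 7 7" and L: "transpose_mat M * Jm * M = Jm"
  and x: "x \<in> carrier_vec 7" and y: "y \<in> carrier_vec 7"
  shows "lor (map_mat real_of_int M *\<^sub>v x) (map_mat real_of_int M *\<^sub>v y) = lor x y"
proof -
  define m where "m = (\<lambda>i t. real_of_int (M $$ (i,t)))"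
  define jr where "jr = (\<lambda>i. real_of_int (jj i))"
  have Mx: "i < 7 \<Longrightarrow> (map_mat real_of_int M *\<^sub>v x) $ i = (\<Sum>s<7. m i s * x $ s)" for i
    using M x by (subst idx_mv7) (auto simp: m_def)
  have My: "i < 7 \<Longrightarrow> (map_mat real_of_int M *\<^sub>v y) $ i = (\<Sum>s<7. m i s * y $ s)" for i
    using M y by (subst idx_mv7) (auto simp: m_def)
  have key: "s < 7 \<Longrightarrow> t < 7 \<Longrightarrow> (\<Sum>i<7. m i s * jr i * m i t) = (if s = t then jr s else 0)" for s t
  proof -
    assume st: "s < 7" "t < 7"
    have "(transpose_mat M * Jm * M) $$ (s,t) = Jm $$ (s,t)" using L by simp
    hence "(\<Sum>i<7. M $$ (i,s) * jj i * M $$ (i,t)) = (if s = t then jj s else 0)"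
      unfolding tJt[OF M st] using st by (simp add: Jm_def)
    hence "real_of_int (\<Sum>i<7. M $$ (i,s) * jj i * M $$ (i,t)) = real_of_int (if s = t then jj s else 0)" by simp
    thus ?thesis by (simp add: m_def jr_def)
  qed
  have "lor (map_mat real_of_int M *\<^sub>v x) (map_mat real_of_int M *\<^sub>v y)
      = (\<Sum>i<7. (\<Sum>s<7. m i s * x $ s) * jr i * (\<Sum>t<7. m i t * y $ t))"
    unfolding lor_jj jr_def by (rule sum.cong) (auto simp: Mx My)
  also have "\<dots> = (\<Sum>i<7. \<Sum>s<7. \<Sum>t<7. x $ s * y $ t * (m i s * jr i * m i t))"
    by (simp add: sum_product sum_distrib_left mult_ac)
  also have "\<dots> = (\<Sum>s<7. \<Sum>i<7. \<Sum>t<7. x $ s * y $ t * (m i s * jr i * m i t))"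
    by (rule sum.swap)
  also have "\<dots> = (\<Sum>s<7. \<Sum>t<7. \<Sum>i<7. x $ s * y $ t * (m i s * jr i * m i t))"
    by (rule sum.cong[OF refl], rule sum.swap)
  also have "\<dots> = (\<Sum>s<7. \<Sum>t<7. x $ s * y $ t * (\<Sum>i<7. m i s * jr i * m i t))"
    by (simp add: sum_distrib_left)
  also have "\<dots> = (\<Sum>s<7. \<Sum>t<7. x $ s * y $ t * (if s = t then jr s else 0))"
    by (intro sum.cong refl) (simp add: key)
  also have "\<dots> = (\<Sum>s<7. x $ s * jr s * y $ s)"
    by (simp add: if_distrib[of "\<lambda>z. _ * z"] mult_ac cong: if_cong)
  also have "\<dots> = lor x y" unfolding lor_jj jr_def ..
  finally show ?thesis .
qed

definition Sq6 :: "real vec \<Rightarrow> real" where "Sq6 x = (\<Sum>i<6. x $ i * x $ i)"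

lemma lorxx: "lor x x = Sq6 x - x $ 6 * x $ 6" by (simp add: lor_def Sq6_def)

lemma RCS: assumes "x \<in> H6" "y \<in> H6" shows "lor x y < 0"
proof -
  define a where "a = x $ 6"
  define b where "b = y $ 6"
  define S where "S = (\<Sum>i<6. x $ i * y $ i)"
  have a: "a > 0" and b: "b > 0" using assms by (auto simp: H6_def a_def b_def)
  have Sx: "(\<Sum>i<6. x $ i * x $ i) = a*a - 1" using assms by (auto simp: H6_def a_def lor_def)
  have Sy: "(\<Sum>i<6. y $ i * y $ i) = b*b - 1" using assms by (auto simp: H6_def b_def lor_def)
  have "0 \<le> (\<Sum>i<6. (b * x $ i - a * y $ i)^2)" by (simp add: sum_nonneg)
  also have "\<dots> = (\<Sum>i<6. b*b*(x$i*x$i) - 2*a*b*(x$i*y$i) + a*a*(y$i*y$i))"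
    by (rule sum.cong) (auto simp: power2_eq_square algebra_simps)
  also have "\<dots> = b*b*(\<Sum>i<6. x $ i * x $ i) - 2*a*b*S + a*a*(\<Sum>i<6. y $ i * y $ i)"
    by (simp add: sum.distrib sum_subtractf sum_distrib_left S_def)
  finally have "2*a*b*S \<le> b*b*(a*a-1) + a*a*(b*b-1)" using Sx Sy by simp
  moreover have "b*b*(a*a-1) + a*a*(b*b-1) = 2*a*b*(a*b) - (a*a + b*b)" by (simp add: algebra_simps)
  moreover have "a*a + b*b > 0" using a b by (simp add: add_pos_pos)
  ultimately have "2*a*b*S < 2*a*b*(a*b)" by linarith
  hence "S < a*b" using a b by simp
  thus ?thesis by (simp add: lor_def S_def a_def b_def)
qed

lemma lor_uminus: "y \<in> carrier_vec 7 \<Longrightarrow> lor (-y) z = - lor (y::real vec) z"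
  by (simp add: lor_def sum_negf)

lemma H6_carrier: "x \<in> H6 \<Longrightarrow> x \<in> carrier_vec 7" by (simp add: H6_def)

lemma G1: assumes M: "M \<in> carrier_mat 7 7"
  and P: "\<forall>x\<in>carrier_vec 7. \<forall>y\<in>carrier_vec 7.
        lor (map_mat real_of_int M *\<^sub>v x) (map_mat real_of_int M *\<^sub>v y) = lor x y"
  and pos: "M $$ (6,6) > 0" and x: "x \<in> H6"
  shows "map_mat real_of_int M *\<^sub>v x \<in> H6"
proof -
  let ?Mr = "map_mat real_of_int M"
  define e7 where "e7 = (unit_vec 7 6 :: real vec)"
  have e7c: "e7 \<in> carrier_vec 7" by (simp add: e7_def)
  have e7H: "e7 \<in> H6" by (simp add: H6_def e7_def lor_def)
  define w where "w = ?Mr *\<^sub>v e7"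
  have wc: "w \<in> carrier_vec 7" unfolding w_def using M e7c by (intro mult_mat_vec_carrier) simp_all
  have w6: "w $ 6 = real_of_int (M $$ (6,6))" using M by (simp add: w_def e7_def)
  have "lor w w = lor e7 e7" unfolding w_def using P[rule_format, OF e7c e7c] .
  hence wH: "w \<in> H6" using e7H wc w6 pos by (simp add: H6_def)
  define y where "y = ?Mr *\<^sub>v x"
  have xc: "x \<in> carrier_vec 7" using x by (simp add: H6_def)
  have yc: "y \<in> carrier_vec 7" unfolding y_def using M xc by (intro mult_mat_vec_carrier) simp_all
  have "lor y y = lor x x" unfolding y_def using P[rule_format, OF xc xc] .
  hence yy: "lor y y = -1" using x by (simp add: H6_def)
  have "lor y w = lor x e7" unfolding y_def w_def using P[rule_format, OF xc e7c] .
  also have "lor x e7 = - (x $ 6)" by (simp add: lor_def e7_def)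
  finally have yw: "lor y w = - (x $ 6)" .
  have x6: "x $ 6 > 0" using x by (simp add: H6_def)
  have "y $ 6 > 0"
  proof (rule ccontr)
    assume "\<not> y $ 6 > 0"
    hence "y $ 6 = 0 \<or> y $ 6 < 0" by linarith
    thus False
    proof
      assume "y $ 6 = 0"
      hence "lor y y = Sq6 y" by (simp add: lorxx)
      moreover have "Sq6 y \<ge> 0" by (simp add: Sq6_def sum_nonneg)
      ultimately show False using yy by simp
    next
      assume neg: "y $ 6 < 0"
      have "-y \<in> H6" using yc yy neg by (simp add: H6_def lor_uminus lor_def sum_negf)
      hence "lor (-y) w < 0" using wH by (rule RCS)
      thus False using yw x6 yc by (simp add: lor_uminus)
    qed
  qed
  thus ?thesis using yc yy by (simp add: H6_def y_def)
qed

lemma LG: assumes M: "M \<in> carrier_mat 7 7" and M': "M' \<in> carrier_mat 7 7"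
  and LM: "transpose_mat M * Jm * M = Jm" and LM': "transpose_mat M' * Jm * M' = Jm"
  and MM': "M * M' = 1\<^sub>m 7" and p: "M $$ (6,6) > 0" and p': "M' $$ (6,6) > 0"
  shows "M \<in> Gamma6_set"
proof -
  have P: "\<forall>x\<in>carrier_vec 7. \<forall>y\<in>carrier_vec 7.
        lor (map_mat real_of_int M *\<^sub>v x) (map_mat real_of_int M *\<^sub>v y) = lor x y"
    using G0[OF M LM] by blast
  have P': "\<forall>x\<in>carrier_vec 7. \<forall>y\<in>carrier_vec 7.
        lor (map_mat real_of_int M' *\<^sub>v x) (map_mat real_of_int M' *\<^sub>v y) = lor x y"
    using G0[OF M' LM'] by blast
  have sub: "(\<lambda>x. map_mat real_of_int M *\<^sub>v x) ` H6 \<subseteq> H6" using G1[OF M P p] by blast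
  have sup: "H6 \<subseteq> (\<lambda>x. map_mat real_of_int M *\<^sub>v x) ` H6"
  proof
    fix y assume y: "y \<in> H6"
    have yc: "y \<in> carrier_vec 7" using y by (simp add: H6_def)
    have "map_mat real_of_int M *\<^sub>v (map_mat real_of_int M' *\<^sub>v y)
        = (map_mat real_of_int M * map_mat real_of_int M') *\<^sub>v y"
      using M M' yc by (simp add: assoc_mult_mat_vec)
    also have "\<dots> = map_mat real_of_int (M * M') *\<^sub>v y"
      by (simp add: of_int_hom.mat_hom_mult[OF M M'])
    also have "\<dots> = y" using MM' yc by (simp add: of_int_hom.mat_hom_one)
    finally show "y \<in> (\<lambda>x. map_mat real_of_int M *\<^sub>v x) ` H6"
      using G1[OF M' P' p' y] by (metis image_eqI)
  qed
  have "(\<lambda>x. map_mat real_of_int M *\<^sub>v x) ` H6 = H6" using sub sup by (rule equalityI)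
  thus ?thesis unfolding Gamma6_set_def using M P by (intro CollectI conjI)
qed

lemma Gamma_mult: assumes "M \<in> Gamma6_set" "Q \<in> Gamma6_set" shows "M * Q \<in> Gamma6_set"
proof -
  have M: "M \<in> carrier_mat 7 7" and Q: "Q \<in> carrier_mat 7 7" using assms by (auto simp: Gamma6_set_def)
  have eq: "x \<in> carrier_vec 7 \<Longrightarrow> map_mat real_of_int (M * Q) *\<^sub>v x
       = map_mat real_of_int M *\<^sub>v (map_mat real_of_int Q *\<^sub>v x)" for x
    using M Q by (simp add: of_int_hom.mat_hom_mult[OF M Q])
  have PM: "\<forall>x\<in>carrier_vec 7. \<forall>y\<in>carrier_vec 7.
        lor (map_mat real_of_int M *\<^sub>v x) (map_mat real_of_int M *\<^sub>v y) = lor x y"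
   and PQ: "\<forall>x\<in>carrier_vec 7. \<forall>y\<in>carrier_vec 7.
        lor (map_mat real_of_int Q *\<^sub>v x) (map_mat real_of_int Q *\<^sub>v y) = lor x y"
   and IM: "(\<lambda>x. map_mat real_of_int M *\<^sub>v x) ` H6 = H6"
   and IQ: "(\<lambda>x. map_mat real_of_int Q *\<^sub>v x) ` H6 = H6"
    using assms by (auto simp: Gamma6_set_def)
  have "(\<lambda>x. map_mat real_of_int (M * Q) *\<^sub>v x) ` H6
     = (\<lambda>x. map_mat real_of_int M *\<^sub>v x) ` ((\<lambda>x. map_mat real_of_int Q *\<^sub>v x) ` H6)"
    unfolding image_image by (rule image_cong[OF refl]) (simp add: eq H6_carrier)
  also have "\<dots> = H6" using IM IQ by simp
  finally have I: "(\<lambda>x. map_mat real_of_int (M * Q) *\<^sub>v x) ` H6 = H6" .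
  have "\<forall>x\<in>carrier_vec 7. \<forall>y\<in>carrier_vec 7.
        lor (map_mat real_of_int (M*Q) *\<^sub>v x) (map_mat real_of_int (M*Q) *\<^sub>v y) = lor x y"
  proof (intro ballI)
    fix x y :: "real vec" assume x: "x \<in> carrier_vec 7" and y: "y \<in> carrier_vec 7"
    have Qx: "map_mat real_of_int Q *\<^sub>v x \<in> carrier_vec 7" using Q x by (intro mult_mat_vec_carrier) simp_all
    have Qy: "map_mat real_of_int Q *\<^sub>v y \<in> carrier_vec 7" using Q y by (intro mult_mat_vec_carrier) simp_all
    show "lor (map_mat real_of_int (M*Q) *\<^sub>v x) (map_mat real_of_int (M*Q) *\<^sub>v y) = lor x y"
      unfolding eq[OF x] eq[OF y] using PM PQ x y Qx Qy by simp
  qed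
  moreover have "M * Q \<in> carrier_mat 7 7" using M Q by simp
  ultimately show ?thesis using I unfolding Gamma6_set_def by (intro CollectI conjI)
qed



definition dmat :: "(nat \<Rightarrow> int) \<Rightarrow> int mat" where
  "dmat d = mat 7 7 (\<lambda>(i,j). if i = j then d i else 0)"

lemma dmat_carrier[simp]: "dmat d \<in> carrier_mat 7 7" by (simp add: dmat_def)

lemma dmat_mult: "dmat d * dmat d' = dmat (\<lambda>i. d i * d' i)"
proof (rule eq_matI)
  fix i j assume ij: "i < dim_row (dmat (\<lambda>i. d i * d' i))" "j < dim_col (dmat (\<lambda>i. d i * d' i))"
  hence "i < 7" "j < 7" by (auto simp: dmat_def)
  thus "(dmat d * dmat d') $$ (i, j) = dmat (\<lambda>i. d i * d' i) $$ (i, j)"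
    by (subst idx_mult7) (auto simp: dmat_def if_distrib[of "\<lambda>z. z * _"] cong: if_cong)
qed (auto simp: dmat_def)

lemma dmat_transpose: "transpose_mat (dmat d) = dmat d"
  by (rule eq_matI) (auto simp: dmat_def)

lemma dmat_one: "dmat (\<lambda>_. 1) = 1\<^sub>m 7"
  by (rule eq_matI) (auto simp: dmat_def)

lemma dmat_eq: "(\<And>i. i < 7 \<Longrightarrow> d i = d' i) \<Longrightarrow> dmat d = dmat d'"
  by (rule eq_matI) (auto simp: dmat_def)

lemma Jm_dmat: "Jm = dmat jj" by (simp add: Jm_def dmat_def)

definition ks :: "nat set \<Rightarrow> nat \<Rightarrow> int" where
  "ks S i = (if i < 6 \<and> Suc i \<in> S then -1 else 1)"

lemma kmat_dmat: "kmat S = dmat (ks S)"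
  unfolding kmat_def dmat_def ks_def by (rule refl)

definition symd :: "nat set \<Rightarrow> nat set \<Rightarrow> nat set" where
  "symd S T = (S - T) \<union> (T - S)"

lemma kmat_carrier[simp]: "kmat S \<in> carrier_mat 7 7" by (simp add: kmat_dmat)

lemma kmat_mult: "kmat S * kmat T = kmat (symd S T)"
  unfolding kmat_dmat dmat_mult by (rule dmat_eq) (auto simp: ks_def symd_def)

lemma kmat_empty: "kmat {} = 1\<^sub>m 7"
  unfolding kmat_dmat dmat_one[symmetric] by (rule dmat_eq) (auto simp: ks_def)

lemma kmat_sq: "kmat S * kmat S = 1\<^sub>m 7"
  unfolding kmat_dmat dmat_mult dmat_one[symmetric] by (rule dmat_eq) (auto simp: ks_def)

lemma kmat_lor: "transpose_mat (kmat S) * Jm * kmat S = Jm"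
  unfolding kmat_dmat Jm_dmat dmat_mult dmat_transpose by (rule dmat_eq) (auto simp: ks_def)

lemma kmat66: "kmat S $$ (6,6) = 1" by (simp add: kmat_def)

lemma kmat_Gamma: "kmat S \<in> Gamma6_set"
  by (rule LG[OF kmat_carrier kmat_carrier kmat_lor kmat_lor kmat_sq]) (simp_all add: kmat66)

lemma symd_simps: "symd S S = {}" "symd S {} = S" "symd {} S = S"
  "symd S T = symd T S" "symd (symd S T) U = symd S (symd T U)"
  by (auto simp: symd_def)

lemma lor_unit: "b < 7 \<Longrightarrow> lor (unit_vec 7 b) (v :: int vec) = jj b * v $ b"
  by (auto simp: lor_def jj_def if_distrib[of "\<lambda>z. z * _"] cong: if_cong)

lemma refl_idx: "a < 7 \<Longrightarrow> b < 7 \<Longrightarrow>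
  refl_mat v $$ (a,b) = (if a = b then 1 else 0) - 2 * (jj b * v $ b) * v $ a"
  by (simp add: refl_mat_def lor_unit)

lemma refl_carrier[simp]: "refl_mat v \<in> carrier_mat 7 7" by (simp add: refl_mat_def)

lemma sum_delta_w: fixes \<alpha> \<beta> w :: "nat \<Rightarrow> int"
  assumes "a < 7" "b < 7"
  shows "(\<Sum>t<7. ((if t = a then 1 else 0) - \<alpha> t) * w t * ((if t = b then 1 else 0) - \<beta> t))
    = (if a = b then w a else 0) - w a * \<beta> a - \<alpha> b * w b + (\<Sum>t<7. \<alpha> t * w t * \<beta> t)"
proof -
  have "(\<Sum>t<7. ((if t = a then 1 else 0) - \<alpha> t) * w t * ((if t = b then 1 else 0) - \<beta> t))
     = (\<Sum>t<7. (if t = a then (if a = b then w a else 0) else 0) - (if t = a then w a * \<beta> a else 0)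
          - (if t = b then \<alpha> b * w b else 0) + \<alpha> t * w t * \<beta> t)"
    by (rule sum.cong) (auto simp: algebra_simps)
  also have "\<dots> = (if a = b then w a else 0) - w a * \<beta> a - \<alpha> b * w b + (\<Sum>t<7. \<alpha> t * w t * \<beta> t)"
    using assms by (simp add: sum.distrib sum_subtractf)
  finally show ?thesis .
qed

lemma lor_int: "lor v (v::int vec) = (\<Sum>t<7. v $ t * jj t * v $ t)"
  by (simp add: lor_jj)

lemma refl_sq: assumes "lor v v = 1" shows "refl_mat v * refl_mat v = 1\<^sub>m 7"
proof (rule eq_matI)
  fix a b assume "a < dim_row (1\<^sub>m 7 :: int mat)" "b < dim_col (1\<^sub>m 7 :: int mat)"
  hence ab: "a < 7" "b < 7" by auto
  have "(refl_mat v * refl_mat v) $$ (a,b) = (\<Sum>t<7. refl_mat v $$ (a,t) * refl_mat v $$ (t,b))"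
    using ab by (intro idx_mult7) auto
  also have "\<dots> = (\<Sum>t<7. ((if t = a then 1 else 0) - 2 * (jj t * v $ t) * v $ a) * 1 *
                     ((if t = b then 1 else 0) - 2 * (jj b * v $ b) * v $ t))"
    using ab by (intro sum.cong refl) (auto simp: refl_idx)
  also have "\<dots> = (if a = b then 1 else 0) - 2 * (jj b * v $ b) * v $ a - 2 * (jj b * v $ b) * v $ a
       + 4 * (jj b * v $ b) * v $ a * (\<Sum>t<7. v $ t * jj t * v $ t)"
    by (subst sum_delta_w[OF ab]) (simp add: sum_distrib_left mult_ac)
  also have "\<dots> = 1\<^sub>m 7 $$ (a,b)" using assms ab by (simp add: lor_int)
  finally show "(refl_mat v * refl_mat v) $$ (a,b) = 1\<^sub>m 7 $$ (a,b)" .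
qed (auto simp: refl_mat_def)

lemma refl_lor: assumes "lor v v = 1" shows "transpose_mat (refl_mat v) * Jm * refl_mat v = Jm"
proof (rule eq_matI)
  fix a b assume "a < dim_row Jm" "b < dim_col Jm"
  hence ab: "a < 7" "b < 7" by (auto simp: Jm_def)
  have "(transpose_mat (refl_mat v) * Jm * refl_mat v) $$ (a,b)
     = (\<Sum>t<7. refl_mat v $$ (t,a) * jj t * refl_mat v $$ (t,b))"
    using ab by (intro tJt) auto
  also have "\<dots> = (\<Sum>t<7. ((if t = a then 1 else 0) - 2 * (jj a * v $ a) * v $ t) * jj t *
                     ((if t = b then 1 else 0) - 2 * (jj b * v $ b) * v $ t))"
    using ab by (intro sum.cong refl) (auto simp: refl_idx)
  also have "\<dots> = (if a = b then jj a else 0) - jj a * (2 * (jj b * v $ b) * v $ a)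
       - 2 * (jj a * v $ a) * v $ b * jj b
       + 4 * (jj a * v $ a) * (jj b * v $ b) * (\<Sum>t<7. v $ t * jj t * v $ t)"
    by (subst sum_delta_w[OF ab]) (simp add: sum_distrib_left mult_ac)
  also have "\<dots> = Jm $$ (a,b)" using assms ab by (simp add: lor_int Jm_def algebra_simps)
  finally show "(transpose_mat (refl_mat v) * Jm * refl_mat v) $$ (a,b) = Jm $$ (a,b)" .
qed (auto simp: Jm_def refl_mat_def)

lemma refl66: "refl_mat v $$ (6,6) > 0"
proof -
  have "refl_mat v $$ (6,6) = 1 + 2 * (v $ 6 * v $ 6)" by (simp add: refl_idx jj_def)
  moreover have "v $ 6 * v $ 6 \<ge> 0" by simp
  ultimately show ?thesis by linarith
qed

lemma refl_Gamma: "lor v v = 1 \<Longrightarrow> refl_mat v \<in> Gamma6_set"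
  by (rule LG[OF refl_carrier refl_carrier refl_lor refl_lor refl_sq refl66 refl66])

lemma refl_conj: assumes X: "X \<in> carrier_mat 7 7" and LX: "transpose_mat X * Jm * X = Jm"
  and v: "v \<in> carrier_vec 7"
  shows "X * refl_mat v = refl_mat (X *\<^sub>v v) * X"
proof (rule eq_matI)
  fix a b assume "a < dim_row (refl_mat (X *\<^sub>v v) * X)" "b < dim_col (refl_mat (X *\<^sub>v v) * X)"
  hence ab: "a < 7" "b < 7" using X by (auto simp: refl_mat_def)
  define w where "w = X *\<^sub>v v"
  have wi: "t < 7 \<Longrightarrow> w $ t = (\<Sum>s<7. X $$ (t,s) * v $ s)" for t
    unfolding w_def using X v by (rule idx_mv7)
  have key: "(\<Sum>t<7. jj t * w $ t * X $$ (t,b)) = jj b * v $ b"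
  proof -
    have "(\<Sum>t<7. jj t * w $ t * X $$ (t,b)) = (\<Sum>t<7. \<Sum>s<7. v $ s * (X $$ (t,s) * jj t * X $$ (t,b)))"
      by (intro sum.cong refl) (simp add: wi sum_distrib_left sum_distrib_right mult_ac)
    also have "\<dots> = (\<Sum>s<7. \<Sum>t<7. v $ s * (X $$ (t,s) * jj t * X $$ (t,b)))"
      by (rule sum.swap)
    also have "\<dots> = (\<Sum>s<7. v $ s * (\<Sum>t<7. X $$ (t,s) * jj t * X $$ (t,b)))"
      by (simp add: sum_distrib_left)
    also have "\<dots> = (\<Sum>s<7. v $ s * (if s = b then jj s else 0))"
    proof (intro sum.cong refl)
      fix s :: nat assume s: "s \<in> {..<7}"
      have "(transpose_mat X * Jm * X) $$ (s,b) = Jm $$ (s,b)" using LX by simp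
      hence "(\<Sum>t<7. X $$ (t,s) * jj t * X $$ (t,b)) = (if s = b then jj s else 0)"
        unfolding tJt[OF X _ ab(2), of s, OF s[simplified]] using s ab by (simp add: Jm_def)
      thus "v $ s * (\<Sum>t<7. X $$ (t,s) * jj t * X $$ (t,b)) = v $ s * (if s = b then jj s else 0)"
        by simp
    qed
    also have "\<dots> = jj b * v $ b" using ab by (simp add: if_distrib[of "\<lambda>z. _ * z"] cong: if_cong)
    finally show ?thesis .
  qed
  have "(X * refl_mat v) $$ (a,b) = (\<Sum>t<7. X $$ (a,t) * refl_mat v $$ (t,b))"
    using X ab by (intro idx_mult7) auto
  also have "\<dots> = (\<Sum>t<7. (if t = b then X $$ (a,t) else 0) - 2 * (jj b * v $ b) * (X $$ (a,t) * v $ t))"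
    using ab by (intro sum.cong refl) (auto simp: refl_idx algebra_simps)
  also have "\<dots> = X $$ (a,b) - 2 * (jj b * v $ b) * w $ a"
    using ab by (simp add: sum_subtractf sum_distrib_left wi)
  finally have L: "(X * refl_mat v) $$ (a,b) = X $$ (a,b) - 2 * (jj b * v $ b) * w $ a" .
  have "(refl_mat w * X) $$ (a,b) = (\<Sum>t<7. refl_mat w $$ (a,t) * X $$ (t,b))"
    using X ab by (intro idx_mult7) auto
  also have "\<dots> = (\<Sum>t<7. (if t = a then X $$ (t,b) else 0) - 2 * w $ a * (jj t * w $ t * X $$ (t,b)))"
    using ab by (intro sum.cong refl) (auto simp: refl_idx algebra_simps)
  also have "\<dots> = X $$ (a,b) - 2 * w $ a * (jj b * v $ b)"
    using ab by (simp add: sum_subtractf sum_distrib_left[symmetric] key)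
  finally have Rr: "(refl_mat w * X) $$ (a,b) = X $$ (a,b) - 2 * w $ a * (jj b * v $ b)" .
  show "(X * refl_mat v) $$ (a,b) = (refl_mat (X *\<^sub>v v) * X) $$ (a,b)"
    using L Rr unfolding w_def by (simp add: mult_ac)
qed (use X in \<open>auto simp: refl_mat_def\<close>)

lemma R_small: "1 \<le> i \<Longrightarrow> i \<le> 6 \<Longrightarrow> R i = kmat {i}"
proof (rule eq_matI)
  fix a b assume i: "1 \<le> i" "i \<le> 6" and "a < dim_row (kmat {i})" "b < dim_col (kmat {i})"
  hence ab: "a < 7" "b < 7" by (auto simp: kmat_def)
  show "R i $$ (a,b) = kmat {i} $$ (a,b)"
    using ab i by (auto simp: R_def u_def e_def refl_idx kmat_def jj_def)
qed (auto simp: R_def refl_mat_def kmat_def)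



definition col :: "nat \<Rightarrow> nat set" where "col j = (if j \<le> 6 then {j} else N j)"

fun prodR :: "nat list \<Rightarrow> int mat" where
  "prodR [] = 1\<^sub>m 7"
| "prodR (j # ws) = R j * prodR ws"

fun colset :: "nat list \<Rightarrow> nat set" where
  "colset [] = {}"
| "colset (j # ws) = symd (col j) (colset ws)"

definition gen :: "nat set \<Rightarrow> nat \<Rightarrow> int mat" where
  "gen L j = kmat L * R j * kmat L * k j"

lemma assoc7: "P \<in> carrier_mat 7 7 \<Longrightarrow> Q \<in> carrier_mat 7 7 \<Longrightarrow> T \<in> carrier_mat 7 7 \<Longrightarrow>
  P * Q * T = P * (Q * T)" by (rule assoc_mult_mat)
lemma mult7[simp]: "P \<in> carrier_mat 7 7 \<Longrightarrow> Q \<in> carrier_mat 7 7 \<Longrightarrow> P * Q \<in> carrier_mat 7 7"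
  by (rule mult_carrier_mat)
lemma one7a[simp]: "P \<in> carrier_mat 7 7 \<Longrightarrow> P * 1\<^sub>m 7 = (P :: int mat)"
  by (rule right_mult_one_mat)
lemma one7b[simp]: "P \<in> carrier_mat 7 7 \<Longrightarrow> 1\<^sub>m 7 * P = (P :: int mat)"
  by (rule left_mult_one_mat)

lemma R_carrier[simp]: "R j \<in> carrier_mat 7 7" by (simp add: R_def)

lemma prodR_carrier[simp]: "prodR ws \<in> carrier_mat 7 7" by (induction ws) auto

definition NL :: "nat set list" where
  "NL = [{2,3,5},{1,2,3,4,5},{3,4,5},{1,2,3,5,6},{1,4,6},{2,3,5},{3,4,5},{1,2,5},{5},
          {2,4,6},{1,2,5},{2,4,6},{6},{1,3,4},{1,2,3,5,6},{1,3,4},{2},{1,4,6},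
          {1,2,3,4,5},{4},{3}]"

lemma N_NL: "N j = NL ! (j - 7)" by (simp add: N_def NL_def)

lemma N_sub: "7 \<le> j \<Longrightarrow> j \<le> 27 \<Longrightarrow> N j \<subseteq> {1..6}"
proof -
  assume j: "7 \<le> j" "j \<le> 27"
  have "length NL = 21" by (simp add: NL_def)
  hence "N j \<in> set NL" using j unfolding N_NL by (intro nth_mem) simp
  moreover have "\<forall>S\<in>set NL. S \<subseteq> {1..6}" by (simp add: NL_def)
  ultimately show ?thesis by blast
qed

lemma col_sub: "1 \<le> j \<Longrightarrow> j \<le> 27 \<Longrightarrow> col j \<subseteq> {1..6}"
  using N_sub by (auto simp: col_def)

lemma kmat_mult_assoc: "X \<in> carrier_mat 7 7 \<Longrightarrow> kmat S * (kmat T * X) = kmat (symd S T) * X"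
  by (simp add: kmat_mult[symmetric] assoc7)

lemma Hgrp_one: "1\<^sub>m 7 \<in> Hgrp"
  using generate.one[of Gamma6 Hgens] by (simp add: Hgrp_def Gamma6_def)

lemma Hgrp_mult: "a \<in> Hgrp \<Longrightarrow> b \<in> Hgrp \<Longrightarrow> a * b \<in> Hgrp"
  using generate.eng[of a Gamma6 Hgens b] by (simp add: Hgrp_def Gamma6_def)

lemma gen_Hgens: "L \<subseteq> {1..6} \<Longrightarrow> 7 \<le> j \<Longrightarrow> j \<le> 27 \<Longrightarrow> gen L j \<in> Hgens"
  unfolding Hgens_def gen_def K6_def by blast

lemma Hgens_gen: "h \<in> Hgens \<Longrightarrow> \<exists>L j. L \<subseteq> {1..6} \<and> 7 \<le> j \<and> j \<le> 27 \<and> h = gen L j"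
  unfolding Hgens_def gen_def K6_def by blast

lemma gen_Hgrp: "L \<subseteq> {1..6} \<Longrightarrow> 7 \<le> j \<Longrightarrow> j \<le> 27 \<Longrightarrow> gen L j \<in> Hgrp"
  unfolding Hgrp_def by (rule generate.incl) (rule gen_Hgens)

lemma words_in_H: "set ws \<subseteq> {1..27} \<Longrightarrow> L \<subseteq> {1..6} \<Longrightarrow>
  kmat L * prodR ws * kmat (colset ws) * kmat L \<in> Hgrp"
proof (induction ws arbitrary: L)
  case Nil
  thus ?case by (simp add: kmat_empty kmat_sq Hgrp_one)
next
  case (Cons j ws)
  define c where "c = col j"
  define C where "C = colset ws"
  define L' where "L' = symd c L"
  have j: "1 \<le> j" "j \<le> 27" using Cons.prems by auto
  have csub: "c \<subseteq> {1..6}" using col_sub[OF j] by (simp add: c_def)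
  have L'sub: "L' \<subseteq> {1..6}" using csub Cons.prems by (auto simp: L'_def symd_def)
  have IH: "kmat L' * prodR ws * kmat C * kmat L' \<in> Hgrp"
    using Cons.IH[OF _ L'sub] Cons.prems by (simp add: C_def)
  define F where "F = kmat L * R j * kmat L * kmat c"
  have F: "F \<in> Hgrp"
  proof (cases "j \<le> 6")
    case True
    hence "F = kmat (symd (symd (symd L {j}) L) {j})"
      using j by (simp add: F_def R_small c_def col_def kmat_mult)
    also have "symd (symd (symd L {j}) L) {j} = {}" by (auto simp: symd_def)
    finally show ?thesis by (simp add: kmat_empty Hgrp_one)
  next
    case False
    hence "F = gen L j" by (simp add: F_def gen_def c_def col_def k_def)
    thus ?thesis using False j Cons.prems by (simp add: gen_Hgrp)
  qed
  have "F * (kmat L' * prodR ws * kmat C * kmat L')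
      = kmat L * (R j * (kmat (symd (symd L c) L') * (prodR ws * kmat (symd C L'))))"
    by (simp add: F_def kmat_mult kmat_mult_assoc assoc7)
  also have "symd (symd L c) L' = {}" by (auto simp: L'_def symd_def)
  also have "symd C L' = symd (symd c C) L" by (auto simp: L'_def symd_def)
  finally have eq: "F * (kmat L' * prodR ws * kmat C * kmat L')
      = kmat L * prodR (j # ws) * kmat (colset (j # ws)) * kmat L"
    by (simp add: kmat_empty kmat_mult C_def c_def assoc7)
  show ?case using Hgrp_mult[OF F IH] unfolding eq .
qed

lemma word_in_H: "set ws \<subseteq> {1..27} \<Longrightarrow> colset ws = {} \<Longrightarrow> prodR ws \<in> Hgrp"
  using words_in_H[of ws "{}"] by (simp add: kmat_empty)



definition wl :: "nat set \<Rightarrow> nat list" where "wl S = filter (\<lambda>t. t \<in> S) [1..<7]"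

definition tw :: "(nat \<Rightarrow> nat) \<Rightarrow> (nat \<Rightarrow> nat set) \<Rightarrow> nat list \<Rightarrow> nat list" where
  "tw \<tau> S ws = concat (map (\<lambda>i. wl (S i) @ [\<tau> i] @ wl (S i)) ws)"

lemma prodR_append: "prodR (xs @ ys) = prodR xs * prodR ys"
  by (induction xs) (simp_all add: assoc7)

lemma colset_append: "colset (xs @ ys) = symd (colset xs) (colset ys)"
  by (induction xs) (auto simp: symd_def)

lemma prodR_distinct: "distinct xs \<Longrightarrow> set xs \<subseteq> {1..6} \<Longrightarrow> prodR xs = kmat (set xs)"
proof (induction xs)
  case Nil thus ?case by (simp add: kmat_empty)
next
  case (Cons j xs)
  hence "prodR (j # xs) = kmat {j} * kmat (set xs)" by (simp add: R_small)
  also have "\<dots> = kmat (set (j # xs))" using Cons.prems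
    by (simp add: kmat_mult) (rule arg_cong[where f = kmat], auto simp: symd_def)
  finally show ?case .
qed

lemma colset_distinct: "distinct xs \<Longrightarrow> set xs \<subseteq> {1..6} \<Longrightarrow> colset xs = set xs"
  by (induction xs) (auto simp: col_def symd_def)

lemma set_wl: "S \<subseteq> {1..6} \<Longrightarrow> set (wl S) = S" by (auto simp: wl_def)
lemma distinct_wl: "distinct (wl S)" by (simp add: wl_def)
lemma set_wl_sub: "set (wl S) \<subseteq> {1..6}" by (auto simp: wl_def)

lemma prodR_wl: "S \<subseteq> {1..6} \<Longrightarrow> prodR (wl S) = kmat S"
  using prodR_distinct[OF distinct_wl set_wl_sub] set_wl by simp

lemma colset_wl_map: "colset (map \<tau> (wl S @ [j] @ wl S)) = col (\<tau> j)"
  by (simp add: colset_append) (auto simp: symd_def)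

lemma colset_tw: "colset (tw \<tau> S ws) = colset (map \<tau> ws)"
proof (induction ws)
  case Nil thus ?case by (simp add: tw_def)
next
  case (Cons i ws)
  have "colset (tw \<tau> S (i # ws)) = symd (colset (wl (S i) @ [\<tau> i] @ wl (S i))) (colset (tw \<tau> S ws))"
    by (simp add: tw_def colset_append[symmetric])
  also have "colset (wl (S i) @ [\<tau> i] @ wl (S i)) = col (\<tau> i)"
    by (simp add: colset_append) (auto simp: symd_def)
  finally show ?case using Cons.IH by simp
qed

lemma set_tw: "(\<And>i. i \<in> set ws \<Longrightarrow> \<tau> i \<in> {1..27}) \<Longrightarrow> set (tw \<tau> S ws) \<subseteq> {1..27}"
  by (auto simp: tw_def wl_def)

locale conjdata =
  fixes X Y :: "int mat" and \<tau> :: "nat \<Rightarrow> nat" and S :: "nat \<Rightarrow> nat set"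
  assumes X: "X \<in> carrier_mat 7 7" and Y: "Y \<in> carrier_mat 7 7"
    and XY: "X * Y = 1\<^sub>m 7" and YX: "Y * X = 1\<^sub>m 7"
    and tau: "\<And>i. 1 \<le> i \<Longrightarrow> i \<le> 27 \<Longrightarrow> 1 \<le> \<tau> i \<and> \<tau> i \<le> 27"
    and Ssub: "\<And>i. 1 \<le> i \<Longrightarrow> i \<le> 27 \<Longrightarrow> S i \<subseteq> {1..6}"
    and XR: "\<And>i. 1 \<le> i \<Longrightarrow> i \<le> 27 \<Longrightarrow> X * R i * Y = kmat (S i) * R (\<tau> i) * kmat (S i)"
    and COL: "\<And>j. 7 \<le> j \<Longrightarrow> j \<le> 27 \<Longrightarrow> col (\<tau> j) = colset (map \<tau> (wl (N j)))"
begin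

lemma conj_prodR: "set ws \<subseteq> {1..27} \<Longrightarrow> X * prodR ws * Y = prodR (tw \<tau> S ws)"
proof (induction ws)
  case Nil thus ?case using XY X by (simp add: tw_def)
next
  case (Cons i ws)
  have i: "1 \<le> i" "i \<le> 27" using Cons.prems by auto
  have "X * prodR (i # ws) * Y = (X * R i * Y) * (X * prodR ws * Y)"
  proof -
    have "X * prodR (i # ws) * Y = X * R i * (Y * X) * prodR ws * Y" using YX X by (simp add: assoc7)
    also have "\<dots> = (X * R i * Y) * (X * prodR ws * Y)" using X Y by (simp add: assoc7)
    finally show ?thesis .
  qed
  also have "X * R i * Y = prodR (wl (S i) @ [\<tau> i] @ wl (S i))"
    using XR[OF i] Ssub[OF i] by (simp add: prodR_append prodR_wl assoc7)
  also have "X * prodR ws * Y = prodR (tw \<tau> S ws)" using Cons by simp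
  finally show ?case by (simp add: tw_def prodR_append assoc7)
qed

lemma conj_gen: assumes L: "L \<subseteq> {1..6}" and j: "7 \<le> j" "j \<le> 27"
  shows "X * gen L j * Y \<in> Hgrp"
proof -
  define ws where "ws = wl L @ [j] @ wl L @ wl (N j)"
  have Nsub: "N j \<subseteq> {1..6}" using N_sub j .
  have g: "gen L j = prodR ws"
    using L Nsub by (simp add: ws_def gen_def prodR_append prodR_wl k_def assoc7)
  have wsset: "set ws \<subseteq> {1..27}" using j by (auto simp: ws_def wl_def)
  have "X * gen L j * Y = prodR (tw \<tau> S ws)" using g conj_prodR[OF wsset] by simp
  moreover have "set (tw \<tau> S ws) \<subseteq> {1..27}"
    using wsset tau by (intro set_tw) fastforce
  moreover have "colset (tw \<tau> S ws) = {}"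
    unfolding colset_tw using COL[OF j] by (simp add: ws_def colset_append) (auto simp: symd_def)
  ultimately show ?thesis using word_in_H by simp
qed

end



definition Vl :: "int list \<Rightarrow> int vec" where "Vl xs = vec 7 (\<lambda>i. xs ! i)"
definition Ml :: "int list list \<Rightarrow> int mat" where "Ml xss = mat 7 7 (\<lambda>(i,j). xss ! i ! j)"
definition lsum :: "(nat \<Rightarrow> int) \<Rightarrow> int" where "lsum f = sum_list (map f [0..<7])"
definition lmv :: "int list list \<Rightarrow> int list \<Rightarrow> int list" where
  "lmv xss v = map (\<lambda>i. lsum (\<lambda>t. xss ! i ! t * v ! t)) [0..<7]"
definition lmul :: "int list list \<Rightarrow> int list list \<Rightarrow> int list list" where
  "lmul xss yss = map (\<lambda>i. map (\<lambda>j. lsum (\<lambda>t. xss ! i ! t * yss ! t ! j)) [0..<7]) [0..<7]"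
definition ltr :: "int list list \<Rightarrow> int list list" where
  "ltr xss = map (\<lambda>i. map (\<lambda>j. xss ! j ! i) [0..<7]) [0..<7]"
definition Jl :: "int list list" where
  "Jl = map (\<lambda>i. map (\<lambda>j. if i = j then jj i else 0) [0..<7]) [0..<7]"
definition IL :: "int list list" where
  "IL = map (\<lambda>i. map (\<lambda>j. if i = j then 1 else 0) [0..<7]) [0..<7]"
definition KL :: "nat set \<Rightarrow> int list list" where
  "KL S = map (\<lambda>i. map (\<lambda>j. if i = j then ks S i else 0) [0..<7]) [0..<7]"

lemma lsum_eq: "lsum f = (\<Sum>t<7. f t)"
  by (simp add: lsum_def interv_sum_list_conv_sum_set_nat lessThan_atLeast0)

lemma Vl_carrier[simp]: "Vl xs \<in> carrier_vec 7" by (simp add: Vl_def)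
lemma Ml_carrier[simp]: "Ml xss \<in> carrier_mat 7 7" by (simp add: Ml_def)

lemma Ml_mv: "Ml xss *\<^sub>v Vl v = Vl (lmv xss v)"
  by (rule eq_vecI) (auto simp: Ml_def Vl_def lmv_def lsum_eq scalar_prod_def lessThan_atLeast0)

lemma Ml_mult: "Ml xss * Ml yss = Ml (lmul xss yss)"
  by (rule eq_matI) (auto simp: Ml_def lmul_def lsum_eq scalar_prod_def lessThan_atLeast0)

lemma Ml_tr: "transpose_mat (Ml xss) = Ml (ltr xss)"
  by (rule eq_matI) (auto simp: Ml_def ltr_def)

lemma Jm_Ml: "Jm = Ml Jl" by (rule eq_matI) (auto simp: Ml_def Jl_def Jm_def)
lemma one_Ml: "1\<^sub>m 7 = Ml IL" by (rule eq_matI) (auto simp: Ml_def IL_def)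
lemma kmat_Ml: "kmat S = Ml (KL S)" by (rule eq_matI) (auto simp: Ml_def KL_def kmat_def ks_def)

definition ue :: "nat \<Rightarrow> int list" where "ue c = map (\<lambda>t. if t = c - 1 then 1 else 0) [0..<7]"
definition ladd :: "int list \<Rightarrow> int list \<Rightarrow> int list" where "ladd a b = map (\<lambda>i. a ! i + b ! i) [0..<7]"
definition lsub :: "int list \<Rightarrow> int list \<Rightarrow> int list" where "lsub a b = map (\<lambda>i. a ! i - b ! i) [0..<7]"
definition lneg :: "int list \<Rightarrow> int list" where "lneg a = map (\<lambda>i. - (a ! i)) [0..<7]"
definition lsm :: "int \<Rightarrow> int list \<Rightarrow> int list" where "lsm c a = map (\<lambda>i. c * a ! i) [0..<7]"

lemma e_Vl: "e c = Vl (ue c)" by (rule eq_vecI) (auto simp: e_def Vl_def ue_def unit_vec_def)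
lemma add_Vl: "Vl a + Vl b = Vl (ladd a b)" by (rule eq_vecI) (auto simp: Vl_def ladd_def)
lemma sub_Vl: "Vl a - Vl b = Vl (lsub a b)" by (rule eq_vecI) (auto simp: Vl_def lsub_def)
lemma neg_Vl: "- Vl a = Vl (lneg a)" by (rule eq_vecI) (auto simp: Vl_def lneg_def)
lemma sm_Vl: "c \<cdot>\<^sub>v Vl a = Vl (lsm c a)" by (rule eq_vecI) (auto simp: Vl_def lsm_def)

definition ulist :: "nat \<Rightarrow> int list" where
  "ulist j = (if j \<le> 6 then lneg (ue j)
          else if j \<le> 21 then
            (let (a, b) = [(1,2),(1,3),(2,3),(1,4),(2,4),(3,4),(1,5),(2,5),(3,5),(4,5),
                           (1,6),(2,6),(3,6),(4,6),(5,6)] ! (j - 7)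
             in ladd (ladd (ue a) (ue b)) (ue 7))
          else
            (let c = [6,5,4,3,2,1::nat] ! (j - 22)
             in ladd (lsub (ladd (ladd (ladd (ladd (ladd (ue 1) (ue 2)) (ue 3)) (ue 4)) (ue 5)) (ue 6)) (ue c)) (lsm 2 (ue 7))))"

lemma u_Vl: "u j = Vl (ulist j)"
  unfolding u_def ulist_def Let_def
  by (simp add: e_Vl add_Vl sub_Vl neg_Vl sm_Vl split: prod.split)

definition llor :: "int list \<Rightarrow> int list \<Rightarrow> int" where
  "llor a b = sum_list (map (\<lambda>i. a ! i * b ! i) [0..<6]) - a ! 6 * b ! 6"

lemma lor_Vl: "lor (Vl a) (Vl b) = llor a b"
  by (simp add: lor_def llor_def Vl_def interv_sum_list_conv_sum_set_nat lessThan_atLeast0)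

lemma u_lor: "7 \<le> j \<Longrightarrow> j \<le> 27 \<Longrightarrow> lor (u j) (u j) = 1"
proof -
  have H: "\<forall>j\<in>set [7..<28]. llor (ulist j) (ulist j) = 1" by code_simp
  assume "7 \<le> j" "j \<le> 27"
  hence "j \<in> set [7..<28]" unfolding set_upt by simp
  with H have "llor (ulist j) (ulist j) = 1" by blast
  thus ?thesis by (simp add: u_Vl lor_Vl)
qed



lemma R_lor: "7 \<le> j \<Longrightarrow> j \<le> 27 \<Longrightarrow> lor (u j) (u j) = 1" by (rule u_lor)

lemma R_Gamma: "7 \<le> j \<Longrightarrow> j \<le> 27 \<Longrightarrow> R j \<in> Gamma6_set"
  unfolding R_def by (rule refl_Gamma, rule u_lor)

lemma R_sq: "7 \<le> j \<Longrightarrow> j \<le> 27 \<Longrightarrow> R j * R j = 1\<^sub>m 7"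
  unfolding R_def by (rule refl_sq, rule u_lor)

lemma R_sq_assoc: "7 \<le> j \<Longrightarrow> j \<le> 27 \<Longrightarrow> Q \<in> carrier_mat 7 7 \<Longrightarrow> R j * (R j * Q) = Q"
  using R_sq by (simp add: assoc7[symmetric])

lemma Gamma_carrier: "M \<in> Gamma6_set \<Longrightarrow> M \<in> carrier_mat 7 7" by (simp add: Gamma6_set_def)

lemma gen_Gamma: "7 \<le> j \<Longrightarrow> j \<le> 27 \<Longrightarrow> gen L j \<in> Gamma6_set"
  unfolding gen_def k_def
  by (intro Gamma_mult kmat_Gamma R_Gamma)

lemma gen_carrier: "gen L j \<in> carrier_mat 7 7" by (simp add: gen_def k_def)

lemma symd_rules: "symd S (symd S T) = T" "symd (symd S T) S = T" "symd (symd S T) T = S"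
  "symd S (symd T S) = T" "symd S S = {}" "symd (symd S T) (symd T S) = {}"
  by (auto simp: symd_def)

lemma gen_inv_prod: assumes j: "7 \<le> j" "j \<le> 27"
  shows "gen L j * gen (symd (N j) L) j = 1\<^sub>m 7"
  using j by (simp add: gen_def k_def assoc7 kmat_mult_assoc kmat_mult symd_rules kmat_empty R_sq_assoc)

lemma inv_Gamma6_eq: assumes g: "g \<in> carrier_mat 7 7" and y: "y \<in> Gamma6_set"
  and gy: "g * y = 1\<^sub>m 7" and yg: "y * g = 1\<^sub>m 7"
  shows "inv\<^bsub>Gamma6\<^esub> g = y"
  unfolding m_inv_def Gamma6_def
proof (simp, rule the_equality)
  show "y \<in> Gamma6_set \<and> g * y = 1\<^sub>m 7 \<and> y * g = 1\<^sub>m 7" using y gy yg by simp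
next
  fix z assume z: "z \<in> Gamma6_set \<and> g * z = 1\<^sub>m 7 \<and> z * g = 1\<^sub>m 7"
  have zc: "z \<in> carrier_mat 7 7" using z Gamma_carrier by blast
  have yc: "y \<in> carrier_mat 7 7" using y Gamma_carrier by blast
  have "z = z * (g * y)" using gy zc by simp
  also have "\<dots> = (z * g) * y" using zc g yc by (simp add: assoc7)
  also have "\<dots> = y" using z yc by simp
  finally show "z = y" .
qed

lemma inv_gen: assumes L: "L \<subseteq> {1..6}" and j: "7 \<le> j" "j \<le> 27"
  shows "inv\<^bsub>Gamma6\<^esub> (gen L j) = gen (symd (N j) L) j" "symd (N j) L \<subseteq> {1..6}"
proof -
  show "symd (N j) L \<subseteq> {1..6}" using N_sub[OF j] L by (auto simp: symd_def)
  have "symd (N j) (symd (N j) L) = L" by (auto simp: symd_def)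
  hence "gen (symd (N j) L) j * gen L j = 1\<^sub>m 7" using gen_inv_prod[OF j, of "symd (N j) L"] by simp
  thus "inv\<^bsub>Gamma6\<^esub> (gen L j) = gen (symd (N j) L) j"
    by (intro inv_Gamma6_eq gen_carrier gen_Gamma j gen_inv_prod)
qed

context conjdata begin

lemma conj_H: "h \<in> Hgrp \<Longrightarrow> h \<in> carrier_mat 7 7 \<and> X * h * Y \<in> Hgrp"
  unfolding Hgrp_def
proof (induction rule: generate.induct)
  case one
  have o: "\<one>\<^bsub>Gamma6\<^esub> = 1\<^sub>m 7" by (simp add: Gamma6_def)
  show ?case unfolding o using XY X Hgrp_one unfolding Hgrp_def by simp
next
  case (incl h)
  then obtain L j where "L \<subseteq> {1..6}" "7 \<le> j" "j \<le> 27" "h = gen L j" using Hgens_gen by blast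
  thus ?case using conj_gen gen_carrier by (simp add: Hgrp_def)
next
  case (inv h)
  then obtain L j where Lj: "L \<subseteq> {1..6}" "7 \<le> j" "j \<le> 27" "h = gen L j" using Hgens_gen by blast
  thus ?case using conj_gen[OF inv_gen(2)[OF Lj(1-3)] Lj(2,3)] inv_gen(1)[OF Lj(1-3)] gen_carrier
    by (simp add: Hgrp_def)
next
  case (eng h1 h2)
  have c1: "h1 \<in> carrier_mat 7 7" and c2: "h2 \<in> carrier_mat 7 7" using eng by auto
  have "X * (h1 * h2) * Y = (X * h1 * Y) * (X * h2 * Y)"
  proof -
    have "(X * h1 * Y) * (X * h2 * Y) = X * h1 * (Y * X) * h2 * Y" using X Y c1 c2 by (simp add: assoc7)
    thus ?thesis using YX X c1 c2 by (simp add: assoc7)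
  qed
  moreover have m: "h1 \<otimes>\<^bsub>Gamma6\<^esub> h2 = h1 * h2" by (simp add: Gamma6_def)
  ultimately show ?case using eng Hgrp_mult[unfolded Hgrp_def] c1 c2 by simp
qed

end

lemma XR_from: assumes X: "X \<in> carrier_mat 7 7" and LX: "transpose_mat X * Jm * X = Jm"
  and XY: "X * Y = 1\<^sub>m 7" and Y: "Y \<in> carrier_mat 7 7"
  and v: "X *\<^sub>v u i = kmat S *\<^sub>v u t"
  shows "X * R i * Y = kmat S * R t * kmat S"
proof -
  have uc: "u i \<in> carrier_vec 7" "u t \<in> carrier_vec 7" by (simp_all add: u_Vl)
  have "X * R i * Y = refl_mat (X *\<^sub>v u i) * X * Y" unfolding R_def using refl_conj[OF X LX uc(1)] by simp
  also have "\<dots> = refl_mat (X *\<^sub>v u i)" using X Y XY by (simp add: assoc7)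
  also have "\<dots> = refl_mat (kmat S *\<^sub>v u t) * (kmat S * kmat S)" by (simp add: v kmat_sq)
  also have "\<dots> = kmat S * R t * kmat S"
    unfolding R_def using refl_conj[OF kmat_carrier kmat_lor uc(2), of S] by (simp add: assoc7)
  finally show ?thesis .
qed



definition Al :: "int list list" where "Al = [[1,0,0,0,0,0,0],
     [0,1,0,0,1,0,-1],
     [0,0,0,0,0,1,0],
     [0,-1,0,-1,0,0,1],
     [0,0,1,0,0,0,0],
     [0,0,0,-1,-1,0,1],
     [0,-1,0,-1,-1,0,2]]"
definition Bl :: "int list list" where "Bl = [[1,0,0,0,0,0,0],[0,1,0,-1,0,0,1],[0,0,0,0,1,0,0],
   [0,0,0,-1,0,-1,1],[0,1,0,0,0,-1,1],[0,0,1,0,0,0,0],[0,1,0,-1,0,-1,2]]"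
definition Dl :: "int list list" where "Dl = [[1,0,0,0,0,0,0],[0,-1,0,-1,0,0,1],[0,0,0,0,1,0,0],
   [0,0,0,-1,0,-1,1],[0,-1,0,0,0,-1,1],[0,0,1,0,0,0,0],[0,-1,0,-1,0,-1,2]]"
definition DIl :: "int list list" where "DIl = [[1,0,0,0,0,0,0],[0,-1,0,0,-1,0,1],[0,0,0,0,0,1,0],
   [0,-1,0,-1,0,0,1],[0,0,1,0,0,0,0],[0,0,0,-1,-1,0,1],[0,-1,0,-1,-1,0,2]]"

definition TA :: "nat list" where "TA = [1,11,5,20,18,3,17,25,21,7,4,14,10,2,16,6,23,19,27,9,12,13,24,26,8,22,15]"
definition TD :: "nat list" where "TD = [1,14,6,11,3,16,10,25,20,13,2,21,22,12,27,15,7,5,18,4,9,26,17,23,8,24,19]"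
definition tauA :: "nat \<Rightarrow> nat" where "tauA i = TA ! (i - 1)"
definition tauD :: "nat \<Rightarrow> nat" where "tauD i = TD ! (i - 1)"
definition SA :: "nat \<Rightarrow> nat set" where
  "SA i = (if i \<in> set [2,5,8,10,12,14,17,19,20,23,26] then {2} else {})"

lemma A_Ml: "A = Ml Al"
  unfolding A_def Al_def Ml_def mat_of_rows_list_def by (simp add: numeral_eq_Suc)

lemma c1: "lmul (lmul (ltr Al) Jl) Al = Jl" by code_simp
lemma c2: "lmul (lmul (ltr Bl) Jl) Bl = Jl" by code_simp
lemma c3: "lmul Al Bl = IL" by code_simp
lemma c4: "lmul Bl Al = IL" by code_simp
lemma c5: "lmul (lmul (ltr Dl) Jl) Dl = Jl" by code_simp
lemma c6: "lmul Dl DIl = IL" by code_simp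
lemma c7: "lmul DIl Dl = IL" by code_simp
lemma c8: "lmul Dl (KL {2}) = Bl" by code_simp
lemma c9: "lmul (KL {2}) DIl = Al" by code_simp

lemma cA: "\<forall>i\<in>set [1..<28]. 1 \<le> tauA i \<and> tauA i \<le> 27 \<and> (\<forall>x\<in>SA i. 1 \<le> x \<and> x \<le> 6) \<and>
   lmv Al (ulist i) = lmv (KL (SA i)) (ulist (tauA i))" by code_simp
lemma cA2: "\<forall>j\<in>set [7..<28]. col (tauA j) = colset (map tauA (wl (N j)))" by code_simp
lemma cD: "\<forall>i\<in>set [1..<28]. 1 \<le> tauD i \<and> tauD i \<le> 27 \<and>
   lmv Dl (ulist i) = lmv (KL {}) (ulist (tauD i))" by code_simp
lemma cD2: "\<forall>j\<in>set [7..<28]. col (tauD j) = colset (map tauD (wl (N j)))" by code_simp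



lemma in_range: "1 \<le> i \<Longrightarrow> i \<le> 27 \<Longrightarrow> i \<in> set [1..<28]" unfolding set_upt by simp
lemma in_range7: "7 \<le> i \<Longrightarrow> i \<le> 27 \<Longrightarrow> i \<in> set [7..<28]" unfolding set_upt by simp

lemma conj_inst:
  assumes XY: "lmul Xl Yl = IL" and YX: "lmul Yl Xl = IL" and LX: "lmul (lmul (ltr Xl) Jl) Xl = Jl"
  and T: "\<forall>i\<in>set [1..<28]. 1 \<le> \<tau> i \<and> \<tau> i \<le> 27 \<and> (\<forall>x\<in>S i. 1 \<le> x \<and> x \<le> 6) \<and>
           lmv Xl (ulist i) = lmv (KL (S i)) (ulist (\<tau> i))"
  and C: "\<forall>j\<in>set [7..<28]. col (\<tau> j) = colset (map \<tau> (wl (N j)))"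
  shows "conjdata (Ml Xl) (Ml Yl) \<tau> S"
proof
  show "Ml Xl \<in> carrier_mat 7 7" "Ml Yl \<in> carrier_mat 7 7" by simp_all
  show xy: "Ml Xl * Ml Yl = 1\<^sub>m 7" by (simp add: Ml_mult XY one_Ml)
  show "Ml Yl * Ml Xl = 1\<^sub>m 7" by (simp add: Ml_mult YX one_Ml)
  fix i :: nat assume i: "1 \<le> i" "i \<le> 27"
  have Ti: "1 \<le> \<tau> i \<and> \<tau> i \<le> 27 \<and> (\<forall>x\<in>S i. 1 \<le> x \<and> x \<le> 6) \<and>
           lmv Xl (ulist i) = lmv (KL (S i)) (ulist (\<tau> i))"
    using T in_range[OF i] by blast
  thus "1 \<le> \<tau> i \<and> \<tau> i \<le> 27" by simp
  show "S i \<subseteq> {1..6}" using Ti by auto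
  have lx: "transpose_mat (Ml Xl) * Jm * Ml Xl = Jm" by (simp add: Ml_tr Ml_mult Jm_Ml LX)
  have v: "Ml Xl *\<^sub>v u i = kmat (S i) *\<^sub>v u (\<tau> i)"
    using Ti by (simp add: u_Vl Ml_mv kmat_Ml)
  show "Ml Xl * R i * Ml Yl = kmat (S i) * R (\<tau> i) * kmat (S i)"
    by (rule XR_from[OF _ lx xy _ v]) simp_all
next
  fix j :: nat assume j: "7 \<le> j" "j \<le> 27"
  show "col (\<tau> j) = colset (map \<tau> (wl (N j)))" using C in_range7[OF j] by blast
qed

lemma conjA: "conjdata A (Ml Bl) tauA SA"
  unfolding A_Ml by (rule conj_inst[OF c3 c4 c1 cA cA2])

lemma conjD: "conjdata (Ml Dl) (Ml DIl) tauD (\<lambda>_. {})"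
  by (rule conj_inst[OF c6 c7 c5 _ cD2]) (use cD in simp)

lemma conjK: "conjdata (kmat {2}) (kmat {2}) id (\<lambda>_. {2})"
proof
  fix j :: nat assume j: "7 \<le> j" "j \<le> 27"
  have "colset (map id (wl (N j))) = N j"
    using colset_distinct[OF distinct_wl set_wl_sub] set_wl[OF N_sub[OF j]] by simp
  thus "col (id j) = colset (map id (wl (N j)))" using j by (simp add: col_def)
qed (auto simp: kmat_sq)

theorem lemma8p3:
  shows "A \<in> carrier Gamma6 \<and>
         (\<lambda>h. A \<otimes>\<^bsub>Gamma6\<^esub> h \<otimes>\<^bsub>Gamma6\<^esub> inv\<^bsub>Gamma6\<^esub> A) ` Hgrp = Hgrp"
proof -
  define B where "B = Ml Bl"
  have Ac: "A \<in> carrier_mat 7 7" by (simp add: A_Ml)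
  have Bc: "B \<in> carrier_mat 7 7" by (simp add: B_def)
  have AB: "A * B = 1\<^sub>m 7" by (simp add: A_Ml B_def Ml_mult c3 one_Ml)
  have BA: "B * A = 1\<^sub>m 7" by (simp add: A_Ml B_def Ml_mult c4 one_Ml)
  have LA: "transpose_mat A * Jm * A = Jm" by (simp add: A_Ml Ml_tr Ml_mult Jm_Ml c1)
  have LB: "transpose_mat B * Jm * B = Jm" by (simp add: B_def Ml_tr Ml_mult Jm_Ml c2)
  have A66: "A $$ (6,6) > 0" by (simp add: A_Ml Ml_def Al_def)
  have B66: "B $$ (6,6) > 0" by (simp add: B_def Ml_def Bl_def)
  have AG: "A \<in> Gamma6_set" by (rule LG[OF Ac Bc LA LB AB A66 B66])
  have BG: "B \<in> Gamma6_set" by (rule LG[OF Bc Ac LB LA BA B66 A66])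
  have invA: "inv\<^bsub>Gamma6\<^esub> A = B" by (rule inv_Gamma6_eq[OF Ac BG AB BA])
  have img: "(\<lambda>h. A \<otimes>\<^bsub>Gamma6\<^esub> h \<otimes>\<^bsub>Gamma6\<^esub> inv\<^bsub>Gamma6\<^esub> A) ` Hgrp = (\<lambda>h. A * h * B) ` Hgrp"
    unfolding invA by (simp add: Gamma6_def)
  have HA: "h \<in> Hgrp \<Longrightarrow> h \<in> carrier_mat 7 7 \<and> A * h * B \<in> Hgrp" for h
    using conjdata.conj_H[OF conjA] unfolding B_def by blast
  have HD: "h \<in> Hgrp \<Longrightarrow> Ml Dl * h * Ml DIl \<in> Hgrp" for h
    using conjdata.conj_H[OF conjD] by blast
  have HK: "h \<in> Hgrp \<Longrightarrow> kmat {2} * h * kmat {2} \<in> Hgrp" for h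
    using conjdata.conj_H[OF conjK] by blast
  have BDK: "B = Ml Dl * kmat {2}" by (simp add: B_def kmat_Ml Ml_mult c8)
  have AKD: "A = kmat {2} * Ml DIl" by (simp add: A_Ml kmat_Ml Ml_mult c9)
  have "(\<lambda>h. A * h * B) ` Hgrp = Hgrp"
  proof
    show "(\<lambda>h. A * h * B) ` Hgrp \<subseteq> Hgrp" using HA by blast
  next
    show "Hgrp \<subseteq> (\<lambda>h. A * h * B) ` Hgrp"
    proof
      fix h assume h: "h \<in> Hgrp"
      have hc: "h \<in> carrier_mat 7 7" using HA[OF h] by blast
      define h' where "h' = B * h * A"
      have "h' = Ml Dl * (kmat {2} * h * kmat {2}) * Ml DIl"
        unfolding h'_def BDK AKD using hc by (simp add: assoc7)
      hence h'H: "h' \<in> Hgrp" using HD[OF HK[OF h]] by simp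
      have "A * h' * B = (A * B) * h * (A * B)"
        unfolding h'_def using hc Ac Bc by (simp add: assoc7)
      also have "\<dots> = h" using hc by (simp add: AB)
      finally show "h \<in> (\<lambda>h. A * h * B) ` Hgrp" using h'H by (metis image_eqI)
    qed
  qed
  thus ?thesis using img AG by (simp add: Gamma6_def)
qed


end
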